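(* Let $\mathcal V$ be a topological vector space over $\mathbb C$, $X$ a non-empty set, and $\mathbb C^X$ the vector space of all complex-valued functions on $X$. Let $T:\mathcal V\to\mathbb C^X$ be a map which is sublinear in the sense that for all $f,g\in\mathcal V$ and $\lambda\in\mathbb C$, $$|T(f+g)|\le |T(f)|+|T(g)|\quad\text{and}\quad |T(\lambda f)|=|\lambda|\,|T(f)|$$ (pointwise on $X$), and suppose that for every $x\in X$ the functional $T_x:\mathcal V\to\mathbb C$, $T_x(f):=T(f)(x)$, is continuous. Let $S=\{f\in\mathcal V: T(f)\text{ is unbounded on }X\}$. Then either $S=\emptyset$ or $S$ is dense and $G_\delta$ in $\mathcal V$.
   Context: No completeness of $\mathcal V$ is assumed. *)

theory Defs
  imports "HOL-Analysis.Analysis"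
begin

definition complex_tvs :: "(complex \<Rightarrow> 'v::{ab_group_add,topological_space} \<Rightarrow> 'v) \<Rightarrow> bool" where
  "complex_tvs sc \<longleftrightarrow>
     vector_space sc \<and>
     continuous_on UNIV (\<lambda>p::'v \<times> 'v. fst p + snd p) \<and>
     continuous_on UNIV (\<lambda>p::complex \<times> 'v. sc (fst p) (snd p))"

end

theory Submission
  imports Defs
begin

theorem mainTheorem1:
  fixes sc :: "complex \<Rightarrow> 'v::{ab_group_add,topological_space} \<Rightarrow> 'v"
    and T :: "'v \<Rightarrow> 'x \<Rightarrow> complex"
  assumes tvs: "complex_tvs sc"
    and subadd: "\<And>f g x. cmod (T (f + g) x) \<le> cmod (T f x) + cmod (T g x)"
    and homog: "\<And>c f x. cmod (T (sc c f) x) = cmod c * cmod (T f x)"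
    and cont: "\<And>x. continuous_on UNIV (\<lambda>f. T f x)"
  shows "{f. \<not> bounded (range (T f))} = {} \<or>
         (closure {f. \<not> bounded (range (T f))} = UNIV \<and> gdelta {f. \<not> bounded (range (T f))})"
proof -
  let ?S = "{f. \<not> bounded (range (T f))}"
  have vs: "vector_space sc" and cadd: "continuous_on UNIV (\<lambda>p::'v \<times> 'v. fst p + snd p)"
    and csc: "continuous_on UNIV (\<lambda>p::complex \<times> 'v. sc (fst p) (snd p))"
    using tvs unfolding complex_tvs_def by auto
  interpret vs: vector_space sc by (rule vs)
  have unb: "f \<in> ?S \<longleftrightarrow> (\<forall>n::nat. \<exists>x. real n < cmod (T f x))" for f
  proof
    assume "f \<in> ?S"
    then have "\<not> (\<exists>a. \<forall>x. cmod (T f x) \<le> a)" by (auto simp: bounded_iff)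
    then show "\<forall>n::nat. \<exists>x. real n < cmod (T f x)" by (meson not_le)
  next
    assume h: "\<forall>n::nat. \<exists>x. real n < cmod (T f x)"
    show "f \<in> ?S"
    proof (rule ccontr)
      assume "f \<notin> ?S"
      then obtain a where a: "\<forall>x. cmod (T f x) \<le> a" by (auto simp: bounded_iff)
      obtain n::nat where "a < real n" using reals_Archimedean2 by blast
      moreover obtain x where "real n < cmod (T f x)" using h by blast
      ultimately show False using a by (meson less_le_trans not_less order_less_trans)
    qed
  qed
  have gd: "gdelta ?S"
  proof -
    define F where "F n = (\<Union>x. {f. real (n::nat) < cmod (T f x)})" for n
    have o1: "open {f. real n < cmod (T f x)}" for n x
      by (rule open_Collect_less[OF continuous_on_const continuous_on_norm[OF cont]])
    have "open (F n)" for n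
      unfolding F_def using o1 by blast
    then have "gdelta (\<Inter>(F ` UNIV))" by (rule gdelta.intros)
    moreover have "\<Inter>(F ` UNIV) = ?S" using unb by (auto simp: F_def)
    ultimately show ?thesis by simp
  qed
  have dense: "closure ?S = UNIV" if g: "g \<in> ?S" for g
  proof -
    have "f \<in> closure ?S" for f
    proof (cases "f \<in> ?S")
      case True then show ?thesis by (rule closure_subset[THEN subsetD])
    next
      case False
      then have "bounded (range (T f))" by simp
      then obtain a where a: "\<forall>x. cmod (T f x) \<le> a" unfolding bounded_iff by blast
      have mem: "f + sc t g \<in> ?S" if t: "t \<noteq> 0" for t
      proof -
        have neg: "cmod (T (- f) x) = cmod (T f x)" for x
        proof -
          have "sc (-1) f = - f"
            using vs.scale_minus_left[ of 1 f] vs.scale_one[ of f]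
            by metis
          then show ?thesis using homog[of "-1" f x] by simp
        qed
        have le: "cmod t * cmod (T g x) \<le> cmod (T (f + sc t g) x) + a" for x
        proof -
          have e: "(f + sc t g) + - f = sc t g" by (simp add: add.commute)
          have "cmod t * cmod (T g x) = cmod (T ((f + sc t g) + - f) x)"
            unfolding e using homog[of t g x] by simp
          also have "\<dots> \<le> cmod (T (f + sc t g) x) + cmod (T (- f) x)" by (rule subadd)
          also have "\<dots> \<le> cmod (T (f + sc t g) x) + a" using neg a by simp
          finally show ?thesis .
        qed
        show ?thesis unfolding unb
        proof
          fix n :: nat
          have tp: "cmod t > 0" using t by simp
          obtain x where x: "(real n + a) / cmod t < cmod (T g x)"
          proof -
            obtain m::nat where "(real n + a) / cmod t < real m" using reals_Archimedean2 by blast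
            moreover obtain x where "real m < cmod (T g x)" using g unb by blast
            ultimately show ?thesis using that by (meson less_trans)
          qed
          then have "real n + a < cmod t * cmod (T g x)" using tp
            by (simp add: divide_less_eq mult.commute)
          with le[of x] show "\<exists>x. real n < cmod (T (f + sc t g) x)" by (intro exI[of _ x]) linarith
        qed
      qed
      have hc: "continuous_on UNIV (\<lambda>t. f + sc t g)"
      proof -
        have c1: "continuous_on UNIV (\<lambda>t::complex. sc t g)"
          using continuous_on_compose2[OF csc continuous_on_Pair[OF continuous_on_id continuous_on_const, of UNIV g]]
          by simp
        show ?thesis
          using continuous_on_compose2[OF cadd continuous_on_Pair[OF continuous_on_const c1, of f]]
          by simp
      qed
      show ?thesis unfolding closure_iff_nhds_not_empty
      proof (intro allI impI)
        fix A U assume UA: "U \<subseteq> A" and oU: "open U" and fU: "f \<in> U"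
        have "open ((\<lambda>t. f + sc t g) -` U)"
          using hc oU by (simp add: continuous_on_open_vimage)
        moreover have "0 \<in> (\<lambda>t. f + sc t g) -` U"
          using fU vs.scale_zero_left[ of g] by simp
        ultimately obtain e where e: "e > 0" "ball 0 e \<subseteq> (\<lambda>t. f + sc t g) -` U"
          by (meson open_contains_ball)
        let ?t = "complex_of_real (e/2)"
        have "?t \<in> ball 0 e" using e by simp
        then have "f + sc ?t g \<in> U" using e by blast
        moreover have "?t \<noteq> 0" using e by simp
        ultimately show "?S \<inter> A \<noteq> {}" using mem UA by blast
      qed
    qed
    then show ?thesis by auto
  qed
  show ?thesis using gd dense by blast
qed

end
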